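(* (i) The commutator subgroup $H^\infty_+$ of $H^\infty$ is dense in $SO(4)$; (ii) $H^\infty$ is dense in $O(4)$; (iii) $\Sigma$ is dense in the unit sphere $\mathcal S$ of $\mathbb{R}^4$.
   Context: Let $\tau=(1+\sqrt5)/2$, $\tau'=(1-\sqrt5)/2$. Let $\Delta\subset\mathbb{R}^4$ be the set of 120 vectors consisting of: the 8 vectors obtained from $(\pm1,0,0,0)$ by permuting coordinates; the 16 vectors $\frac12(\pm1,\pm1,\pm1,\pm1)$; and the 96 vectors obtained from $\frac12(0,\pm1,\pm\tau',\pm\tau)$ (all sign choices) by even permutations of the coordinates. Let $\Delta'$ be the image of $\Delta$ under the Galois conjugation $\tau\leftrightarrow\tau'$ applied to each coordinate. For a unit vector $a$, $r_a(x)=x-2(x\cdot a)a$. Let $H_4$ (resp. $H_4'$) be the group generated by $r_a$, $a\in\Delta$ (resp. $a\in\Delta'$), and $H^\infty$ the subgroup of $O(4)$ generated by $H_4\cup H_4'$. Let $\Sigma=\{w(a): w\in H^\infty,\ a\in\Delta\cup\Delta'\}$. *)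

theory Defs
  imports "HOL-Analysis.Analysis"
begin

definition tau :: real where "tau = (1 + sqrt 5) / 2"
definition tau' :: real where "tau' = (1 - sqrt 5) / 2"

text \<open>The 120 root vectors, parametrised by the pair (t, t') that plays the role of
  (tau, tau'); Delta = roots tau tau', and its Galois conjugate Delta' = roots tau' tau
  (all other entries are rational, so conjugation only swaps tau and tau').\<close>
definition roots :: "real \<Rightarrow> real \<Rightarrow> (real^4) set" where
  "roots t t' =
     {(\<chi> i. if i = k then s else 0) | k s. s \<in> {-1, 1}}
   \<union> {(\<chi> i. s i / 2) | s. \<forall>i. s i \<in> {-1, 1}}
   \<union> {(\<chi> i. s (p i) * (vector [0, 1, t', t] :: real^4) $ (p i) / 2) | s p.
        (\<forall>i. s i \<in> {-1, 1}) \<and> p permutes (UNIV :: 4 set) \<and> evenperm p}"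

definition Delta :: "(real^4) set" where "Delta = roots tau tau'"
definition Delta' :: "(real^4) set" where "Delta' = roots tau' tau"

definition reflmat :: "real^4 \<Rightarrow> real^4^4" where
  "reflmat a = (\<chi> i j. (if i = j then 1 else 0) - 2 * a $ i * a $ j)"

inductive_set gen_group :: "(real^4^4) set \<Rightarrow> (real^4^4) set" for S where
  one: "mat 1 \<in> gen_group S"
| gen: "g \<in> S \<Longrightarrow> g \<in> gen_group S"
| mult: "g \<in> gen_group S \<Longrightarrow> h \<in> gen_group S \<Longrightarrow> g ** h \<in> gen_group S"
| inv: "g \<in> gen_group S \<Longrightarrow> matrix_inv g \<in> gen_group S"

definition H4 :: "(real^4^4) set" where "H4 = gen_group (reflmat ` Delta)"
definition H4' :: "(real^4^4) set" where "H4' = gen_group (reflmat ` Delta')"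
definition Hinf :: "(real^4^4) set" where "Hinf = gen_group (H4 \<union> H4')"

definition commutator_subgroup :: "(real^4^4) set \<Rightarrow> (real^4^4) set" where
  "commutator_subgroup G =
     gen_group {g ** h ** matrix_inv g ** matrix_inv h | g h. g \<in> G \<and> h \<in> G}"

definition O4 :: "(real^4^4) set" where "O4 = {A. orthogonal_matrix A}"
definition SO4 :: "(real^4^4) set" where "SO4 = {A. orthogonal_matrix A \<and> det A = 1}"

definition Sigma_roots :: "(real^4) set" where
  "Sigma_roots = {w *v a | w a. w \<in> Hinf \<and> a \<in> Delta \<union> Delta'}"

end

theory Submission
  imports Defs
begin

definition rv :: "'a::real_inner \<Rightarrow> 'a \<Rightarrow> 'a" where
  "rv a x = x - (2 * (a \<bullet> x)) *\<^sub>R a"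

definition rotc :: "'a::real_inner \<Rightarrow> 'a \<Rightarrow> real \<Rightarrow> real \<Rightarrow> 'a \<Rightarrow> 'a" where
  "rotc p q c rr x = x + ((c - 1) * (p \<bullet> x)) *\<^sub>R p + ((c - 1) * (q \<bullet> x)) *\<^sub>R q
      + (rr * (p \<bullet> x)) *\<^sub>R q - (rr * (q \<bullet> x)) *\<^sub>R p"

lemma lin1: fixes x a b :: "'a::real_vector" shows "x + c1 *\<^sub>R a + c2 *\<^sub>R b - k *\<^sub>R a = x + (c1 - k) *\<^sub>R a + c2 *\<^sub>R b"
  by (simp add: algebra_simps)
lemma lin2: fixes x a b :: "'a::real_vector" shows "x + c1 *\<^sub>R a + c2 *\<^sub>R b - k *\<^sub>R b = x + c1 *\<^sub>R a + (c2 - k) *\<^sub>R b"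
  by (simp add: algebra_simps)
lemma lin3: fixes x a b :: "'a::real_vector" shows
  "x + P *\<^sub>R a + Q *\<^sub>R ((1/r) *\<^sub>R (b - w *\<^sub>R a)) + S *\<^sub>R ((1/r) *\<^sub>R (b - w *\<^sub>R a)) - T *\<^sub>R a
   = x + (P - T - (Q + S) * w / r) *\<^sub>R a + ((Q+S)/r) *\<^sub>R b"
  by (simp add: algebra_simps diff_divide_distrib add_divide_distrib)

lemma rv_a_step:
  assumes "a \<bullet> a = 1" "a \<bullet> b = w"
  shows "rv a (x + c1 *\<^sub>R a + c2 *\<^sub>R b) = x + (c1 - 2*(a \<bullet> x + c1 + c2*w)) *\<^sub>R a + c2 *\<^sub>R b"
proof -
  have "a \<bullet> (x + c1 *\<^sub>R a + c2 *\<^sub>R b) = a \<bullet> x + c1 + c2*w"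
    using assms by (simp add: inner_add_right)
  then show ?thesis unfolding rv_def lin1 by simp
qed

lemma rv_b_step:
  assumes "b \<bullet> b = 1" "a \<bullet> b = w"
  shows "rv b (x + c1 *\<^sub>R a + c2 *\<^sub>R b) = x + c1 *\<^sub>R a + (c2 - 2*(b \<bullet> x + c1*w + c2)) *\<^sub>R b"
proof -
  have "b \<bullet> (x + c1 *\<^sub>R a + c2 *\<^sub>R b) = b \<bullet> x + c1*w + c2"
    using assms by (simp add: inner_add_right inner_commute)
  then show ?thesis unfolding rv_def lin2 by simp
qed

lemma comm_formula:
  fixes a b x :: "'a::real_inner"
  assumes aa: "a \<bullet> a = 1" and bb: "b \<bullet> b = 1" and w: "a \<bullet> b = w" and w2: "w^2 < 1"
    and rr: "rr = sqrt (1 - w^2)" and q: "q = (1/rr) *\<^sub>R (b - w *\<^sub>R a)"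
  shows "rv a (rv b (rv a (rv b x))) = rotc a q (8*w^4 - 8*w^2 + 1) (-4*rr*w*(2*w^2-1)) x"
proof -
  have s0: "rr > 0" using w2 rr by simp
  have ss: "rr^2 = 1 - w^2" using w2 rr by simp
  define al where "al = a \<bullet> x"
  define be where "be = b \<bullet> x"
  define B1 where "B1 = -2*be"
  define A2 where "A2 = -2*(al + B1*w)"
  define B3 where "B3 = B1 - 2*(be + A2*w + B1)"
  define A4 where "A4 = A2 - 2*(al + A2 + B3*w)"
  have 1: "rv b x = x + 0 *\<^sub>R a + B1 *\<^sub>R b"
    using rv_b_step[OF bb w, of x 0 0] by (simp add: B1_def be_def)
  have 2: "rv a (rv b x) = x + A2 *\<^sub>R a + B1 *\<^sub>R b"
    unfolding 1 rv_a_step[OF aa w] by (simp add: A2_def al_def)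
  have 3: "rv b (rv a (rv b x)) = x + A2 *\<^sub>R a + B3 *\<^sub>R b"
    unfolding 2 rv_b_step[OF bb w] by (simp add: B3_def be_def)
  have 4: "rv a (rv b (rv a (rv b x))) = x + A4 *\<^sub>R a + B3 *\<^sub>R b"
    unfolding 3 rv_a_step[OF aa w] by (simp add: A4_def al_def)
  define c where "c = 8*w^4 - 8*w^2 + 1"
  define zn where "zn = -4*rr*w*(2*w^2-1)"
  define qx where "qx = (be - w*al)/rr"
  have qx: "q \<bullet> x = qx" unfolding q qx_def al_def be_def
    by (simp add: inner_diff_left divide_simps)
  define K where "K = (c - 1) * qx + zn * al"
  have R: "rotc a q c zn x = x + ((c - 1) * al - zn * qx - K * w / rr) *\<^sub>R a + (K / rr) *\<^sub>R b"
    unfolding rotc_def qx al_def[symmetric] unfolding q lin3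
    by (simp add: algebra_simps K_def)
  have e1: "A4 = (c - 1) * al - zn * qx - K * w / rr"
    unfolding A4_def A2_def B3_def B1_def K_def qx_def c_def zn_def using s0 ss
    by (simp add: field_simps) algebra
  have e2: "B3 = K / rr"
    unfolding A2_def B3_def B1_def K_def qx_def c_def zn_def using s0 ss
    by (simp add: field_simps) algebra
  show ?thesis using 4 R e1 e2 by (simp add: c_def zn_def)
qed
lemma lin4: fixes x a q :: "'a::real_vector" shows
  "x + k1 *\<^sub>R (al *\<^sub>R a + be *\<^sub>R q) + k2 *\<^sub>R (ga *\<^sub>R a + de *\<^sub>R q)
     + k3 *\<^sub>R (ga *\<^sub>R a + de *\<^sub>R q) - k4 *\<^sub>R (al *\<^sub>R a + be *\<^sub>R q)
   = x + (k1*al + k2*ga + k3*ga - k4*al) *\<^sub>R a + (k1*be + k2*de + k3*de - k4*be) *\<^sub>R q"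
  by (simp add: algebra_simps)

lemma lin5: fixes x a q :: "'a::real_vector" shows
  "x + P *\<^sub>R a + Q *\<^sub>R q + S *\<^sub>R q - T *\<^sub>R a = x + (P - T) *\<^sub>R a + (Q + S) *\<^sub>R q"
  by (simp add: algebra_simps)

lemma rotc_basis:
  fixes a q :: "'a::real_inner"
  assumes aa: "a \<bullet> a = 1" and qq: "q \<bullet> q = 1" and aq: "a \<bullet> q = 0"
    and p: "p = al *\<^sub>R a + be *\<^sub>R q" and p': "p' = ga *\<^sub>R a + de *\<^sub>R q"
    and pp: "p \<bullet> p = 1" and pp': "p' \<bullet> p' = 1" and ppo: "p \<bullet> p' = 0"
  shows "\<exists>e. (e = 1 \<or> e = -1) \<and> (\<forall>c s x. rotc p p' c s x = rotc a q c (e * s) x)"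
proof -
  have qa: "q \<bullet> a = 0" using aq by (simp add: inner_commute)
  have n1: "al^2 + be^2 = 1" using pp unfolding p
    by (simp add: inner_add_left inner_add_right aa qq aq qa power2_eq_square)
  have n2: "ga^2 + de^2 = 1" using pp' unfolding p'
    by (simp add: inner_add_left inner_add_right aa qq aq qa power2_eq_square)
  have n3: "al*ga + be*de = 0" using ppo unfolding p p'
    by (simp add: inner_add_left inner_add_right aa qq aq qa power2_eq_square mult.commute)
  define e where "e = al*de - be*ga"
  have e2: "e^2 = 1" unfolding e_def using n1 n2 n3 by algebra
  have ga: "ga = -e*be" unfolding e_def using n1 n3 by algebra
  have de: "de = e*al" unfolding e_def using n1 n3 by algebra
  have "e = 1 \<or> e = -1" using e2 by (simp add: power2_eq_1_iff)
  moreover have "rotc p p' c s x = rotc a q c (e * s) x" for c s x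
  proof -
    define A where "A = a \<bullet> x"
    define B where "B = q \<bullet> x"
    have px: "p \<bullet> x = al*A + be*B" unfolding p A_def B_def by (simp add: inner_add_left)
    have p'x: "p' \<bullet> x = ga*A + de*B" unfolding p' A_def B_def by (simp add: inner_add_left)
    have L: "rotc p p' c s x = x + ((c - 1) * (al*A + be*B)*al + (c - 1) * (ga*A + de*B)*ga
         + s * (al*A + be*B)*ga - s * (ga*A + de*B)*al) *\<^sub>R a
       + ((c - 1) * (al*A + be*B)*be + (c - 1) * (ga*A + de*B)*de
         + s * (al*A + be*B)*de - s * (ga*A + de*B)*be) *\<^sub>R q"
      unfolding rotc_def px p'x unfolding p p' lin4 by simp
    have R: "rotc a q c (e * s) x = x + ((c - 1) * A - e * s*B) *\<^sub>R a + ((c - 1) * B + e * s*A) *\<^sub>R q"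
      unfolding rotc_def A_def[symmetric] B_def[symmetric] lin5 by (simp add: algebra_simps)
    have c1: "(c - 1) * (al*A + be*B)*al + (c - 1) * (ga*A + de*B)*ga
         + s * (al*A + be*B)*ga - s * (ga*A + de*B)*al = (c - 1) * A - e * s*B"
      unfolding ga de using n1 e2 by algebra
    have c2: "(c - 1) * (al*A + be*B)*be + (c - 1) * (ga*A + de*B)*de
         + s * (al*A + be*B)*de - s * (ga*A + de*B)*be = (c - 1) * B + e * s*A"
      unfolding ga de using n1 e2 by algebra
    show ?thesis using L R c1 c2 by simp
  qed
  ultimately show ?thesis by blast
qed

lemma rotc_form: "rotc p q c s x = x + ((c - 1)*(p \<bullet> x) - s*(q \<bullet> x)) *\<^sub>R p + ((c - 1)*(q \<bullet> x) + s*(p \<bullet> x)) *\<^sub>R q"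
  unfolding rotc_def lin5 by (simp add: algebra_simps)

lemma lin6: fixes x p q :: "'a::real_vector" shows
  "x + A *\<^sub>R p + B *\<^sub>R q + C *\<^sub>R p + D *\<^sub>R q = x + (A + C) *\<^sub>R p + (B + D) *\<^sub>R q"
  by (simp add: algebra_simps)

lemma rotc_comp:
  fixes p q :: "'a::real_inner"
  assumes pp: "p \<bullet> p = 1" and qq: "q \<bullet> q = 1" and pq: "p \<bullet> q = 0"
  shows "rotc p q (cos s) (sin s) (rotc p q (cos t) (sin t) x) = rotc p q (cos (s+t)) (sin (s+t)) x"
proof -
  have qp: "q \<bullet> p = 0" using pq by (simp add: inner_commute)
  define P where "P = p \<bullet> x"
  define Q where "Q = q \<bullet> x"
  define y where "y = rotc p q (cos t) (sin t) x"
  have y: "y = x + ((cos t - 1)*P - sin t*Q) *\<^sub>R p + ((cos t - 1)*Q + sin t*P) *\<^sub>R q"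
    unfolding y_def rotc_form P_def Q_def ..
  have py: "p \<bullet> y = cos t * P - sin t * Q" unfolding y
    by (simp add: inner_add_right pp pq P_def[symmetric] algebra_simps)
  have qy: "q \<bullet> y = cos t * Q + sin t * P" unfolding y
    by (simp add: inner_add_right qq qp Q_def[symmetric] algebra_simps)
  have "rotc p q (cos s) (sin s) y = y + ((cos s - 1)*(cos t * P - sin t * Q) - sin s*(cos t * Q + sin t * P)) *\<^sub>R p
        + ((cos s - 1)*(cos t * Q + sin t * P) + sin s*(cos t * P - sin t * Q)) *\<^sub>R q"
    unfolding rotc_form py qy ..
  also have "\<dots> = x + ((cos (s+t) - 1)*P - sin (s+t)*Q) *\<^sub>R p + ((cos (s+t) - 1)*Q + sin (s+t)*P) *\<^sub>R q"
  proof -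
    have e1: "(cos t - 1)*P - sin t*Q + ((cos s - 1)*(cos t * P - sin t * Q) - sin s*(cos t * Q + sin t * P))
       = (cos (s+t) - 1)*P - sin (s+t)*Q" by (simp add: cos_add sin_add algebra_simps)
    have e2: "(cos t - 1)*Q + sin t*P + ((cos s - 1)*(cos t * Q + sin t * P) + sin s*(cos t * P - sin t * Q))
       = (cos (s+t) - 1)*Q + sin (s+t)*P" by (simp add: cos_add sin_add algebra_simps)
    show ?thesis unfolding y lin6 e1 e2 ..
  qed
  finally show ?thesis unfolding y_def rotc_form[of p q "cos (s+t)"] P_def Q_def .
qed

lemma rotc_p: assumes "p \<bullet> p = 1" "q \<bullet> q = 1" "p \<bullet> q = 0"
  shows "rotc p q c s p = c *\<^sub>R p + s *\<^sub>R q"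
  using assms unfolding rotc_form by (simp add: inner_commute algebra_simps)

lemma rotc_q: assumes "p \<bullet> p = 1" "q \<bullet> q = 1" "p \<bullet> q = 0"
  shows "rotc p q c s q = c *\<^sub>R q - s *\<^sub>R p"
  using assms unfolding rotc_form by (simp add: inner_commute algebra_simps)

lemma rotc_perp: assumes "p \<bullet> z = 0" "q \<bullet> z = 0"
  shows "rotc p q c s z = z"
  using assms unfolding rotc_form by simp

lemma rotc_add: "rotc p q c s (x + y) = rotc p q c s x + rotc p q c s y"
  unfolding rotc_def by (simp add: inner_add_right algebra_simps)

lemma rotc_scale: "rotc p q c s (k *\<^sub>R x) = k *\<^sub>R rotc p q c s x"
  unfolding rotc_def by (simp add: algebra_simps)

fun Pseq :: "int \<Rightarrow> nat \<Rightarrow> int" where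
  "Pseq k 0 = 2"
| "Pseq k (Suc 0) = k"
| "Pseq k (Suc (Suc n)) = k * Pseq k (Suc n) - 256 * Pseq k n"

lemma cos_rec: "cos (real (Suc (Suc n)) * x) = 2 * cos x * cos (real (Suc n) * x) - cos (real n * x)"
proof -
  have g: "cos (A + x) = 2 * cos x * cos A - cos (A - x)" for A
    by (simp add: cos_add cos_diff)
  have a: "real (Suc (Suc n)) * x = real (Suc n) * x + x" by (simp add: algebra_simps)
  have b: "real n * x = real (Suc n) * x - x" by (simp add: algebra_simps)
  show ?thesis unfolding a b g ..
qed

lemma Pseq_cos:
  assumes k: "32 * cos x = of_int k"
  shows "2 * cos (real n * x) * 16^n = of_int (Pseq k n)"
proof (induction n rule: Pseq.induct[where ?P="\<lambda>k' n. 2 * cos (real n * x) * 16^n = of_int (Pseq k n)"])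
  case (1 k') then show ?case by simp
next
  case (2 k') then show ?case using k by simp
next
  case (3 k' n)
  have "2 * cos (real (Suc (Suc n)) * x) * 16^(Suc (Suc n))
      = (32 * cos x) * (2 * cos (real (Suc n) * x) * 16^(Suc n)) - 256 * (2 * cos (real n * x) * 16^n)"
    unfolding cos_rec by (simp add: algebra_simps)
  also have "\<dots> = of_int (Pseq k (Suc (Suc n)))" using 3 k by simp
  finally show ?case .
qed

lemma Pseq_odd: assumes "odd k" shows "odd (Pseq k (Suc n))"
proof (induction n)
  case 0 then show ?case using assms by simp
next
  case (Suc n) then show ?case using assms by simp
qed

lemma angle_irrational:
  assumes k: "32 * cos x = of_int k" and odd: "odd k"
  shows "x / (2*pi) \<notin> \<rat>"
proof
  assume "x / (2*pi) \<in> \<rat>"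
  then obtain a b where ab: "x / (2*pi) = of_int a / of_int b" and b: "b > 0"
    by (metis Rats_cases')
  define n where "n = nat b"
  have n0: "n > 0" using b by (simp add: n_def)
  have "real n * x = 2 * pi * of_int a"
    using ab b by (simp add: n_def field_simps)
  then have c1: "cos (real n * x) = 1"
    using cos_int_2pin[of a] by (simp add: mult.commute)
  have "(of_int (Pseq k n)::real) = 2 * 16^n"
    using Pseq_cos[OF k, of n] c1 by simp
  then have "(of_int (Pseq k n)::real) = of_int (2 * 16^n)" by simp
  then have "Pseq k n = 2 * 16^n" by (simp only: of_int_eq_iff)
  moreover have "odd (Pseq k n)" using Pseq_odd[OF odd, of "n - 1"] n0 by simp
  ultimately show False by simp
qed

lemma inner4: "(x::real^4) \<bullet> y = x$1*y$1 + x$2*y$2 + x$3*y$3 + x$4*y$4"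
  by (simp add: inner_vec_def sum_4)

lemma mv4: "((A::real^4^4) *v x) $ i = A$i$1*x$1 + A$i$2*x$2 + A$i$3*x$3 + A$i$4*x$4"
  by (simp add: matrix_vector_mult_def sum_4)

lemma reflmat_act: "reflmat a *v x = rv a x"
  unfolding vec_eq_iff forall_4
  by (simp add: mv4 reflmat_def rv_def inner4 algebra_simps)

definition rotm :: "real^4 \<Rightarrow> real^4 \<Rightarrow> real \<Rightarrow> real \<Rightarrow> real^4^4" where
  "rotm p q c s = (\<chi> i j. (if i = j then 1 else 0) + (c - 1) * (p$i*p$j + q$i*q$j) + s * (q$i*p$j - p$i*q$j))"

lemma rotm_act: "rotm p q c s *v x = rotc p q c s x"
  unfolding vec_eq_iff forall_4
  by (simp add: mv4 rotm_def rotc_def inner4 algebra_simps)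

lemma mat_eqI: "(\<And>x. (A::real^4^4) *v x = B *v x) \<Longrightarrow> A = B"
  using matrix_eq by blast

lemma transpose_inner: "(transpose (A::real^'n^'n) *v x) \<bullet> y = x \<bullet> (A *v y)"
  by (simp add: dot_lmul_matrix)

lemma orth_inner: assumes "orthogonal_matrix (Q::real^'n^'n)"
  shows "(Q *v x) \<bullet> (Q *v y) = x \<bullet> y"
proof -
  have 1: "(Q *v x) \<bullet> (Q *v y) = (transpose Q *v (Q *v x)) \<bullet> y" by (rule transpose_inner[symmetric])
  have 2: "transpose Q *v (Q *v x) = x" using assms
    by (simp only: matrix_vector_mul_assoc orthogonal_matrix_def matrix_vector_mul_lid)
  show ?thesis using 1 2 by simp
qed

lemma orth_norm: assumes "orthogonal_matrix (Q::real^'n^'n)"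
  shows "norm (Q *v x) = norm x"
  using orth_inner[OF assms, of x x] by (simp add: norm_eq_sqrt_inner)

lemma orth_inv: assumes "orthogonal_matrix (Q::real^'n^'n)"
  shows "matrix_inv Q = transpose Q"
proof -
  have ex: "Q ** transpose Q = mat 1 \<and> transpose Q ** Q = mat 1"
    using assms by (simp add: orthogonal_matrix_def)
  then have "Q ** matrix_inv Q = mat 1 \<and> matrix_inv Q ** Q = mat 1"
    unfolding matrix_inv_def by (rule someI)
  then have "matrix_inv Q = (transpose Q ** Q) ** matrix_inv Q" using ex by (simp add: matrix_mul_lid)
  also have "\<dots> = transpose Q ** (Q ** matrix_inv Q)" by (simp add: matrix_mul_assoc)
  also have "\<dots> = transpose Q" using \<open>Q ** matrix_inv Q = mat 1 \<and> _\<close> by (simp add: matrix_mul_rid)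
  finally show ?thesis .
qed

lemma reflmat_transpose: "transpose (reflmat a) = reflmat a"
  unfolding transpose_def reflmat_def vec_eq_iff by (simp add: mult.commute)

lemma rv_rv: "a \<bullet> a = 1 \<Longrightarrow> rv a (rv a x) = x"
  unfolding rv_def by (simp add: inner_diff_right algebra_simps)

lemma reflmat_sq: "a \<bullet> a = 1 \<Longrightarrow> reflmat a ** reflmat a = mat 1"
  by (rule mat_eqI) (simp add: matrix_vector_mul_assoc[symmetric] reflmat_act rv_rv)

lemma reflmat_orth: "a \<bullet> a = 1 \<Longrightarrow> orthogonal_matrix (reflmat a)"
  unfolding orthogonal_matrix_def reflmat_transpose by (simp add: reflmat_sq)

lemma reflmat_conj: assumes Q: "orthogonal_matrix Q"
  shows "reflmat (Q *v a) = Q ** reflmat a ** transpose Q"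
proof (rule mat_eqI)
  fix x
  have QQ: "Q *v (transpose Q *v x) = x" using Q
    by (simp only: matrix_vector_mul_assoc orthogonal_matrix_def matrix_vector_mul_lid)
  have i: "a \<bullet> (transpose Q *v x) = (Q *v a) \<bullet> x"
    by (metis transpose_inner inner_commute transpose_transpose)
  have "(Q ** reflmat a ** transpose Q) *v x = Q *v (reflmat a *v (transpose Q *v x))"
    by (simp only: matrix_vector_mul_assoc matrix_mul_assoc)
  also have "\<dots> = Q *v (transpose Q *v x) - (2 * (a \<bullet> (transpose Q *v x))) *\<^sub>R (Q *v a)"
    by (simp only: reflmat_act rv_def matrix_vector_mult_diff_distrib matrix_vector_mult_scaleR)
  also have "\<dots> = x - (2 * ((Q *v a) \<bullet> x)) *\<^sub>R (Q *v a)"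
    by (simp only: QQ i)
  finally show "reflmat (Q *v a) *v x = (Q ** reflmat a ** transpose Q) *v x"
    by (simp only: reflmat_act rv_def)
qed

lemma gen_group_O4: assumes "S \<subseteq> O4" shows "gen_group S \<subseteq> O4"
proof
  fix g assume "g \<in> gen_group S"
  then show "g \<in> O4"
  proof induction
    case one then show ?case by (simp add: O4_def orthogonal_matrix_id)
  next
    case (gen g) then show ?case using assms by blast
  next
    case (mult g h) then show ?case by (simp add: O4_def orthogonal_matrix_mul)
  next
    case (inv g) then show ?case by (simp add: O4_def orth_inv)
  qed
qed

lemma gen_group_SO4: assumes "S \<subseteq> SO4" shows "gen_group S \<subseteq> SO4"
proof
  fix g assume "g \<in> gen_group S"
  then show "g \<in> SO4"
  proof induction
    case one then show ?case by (simp add: SO4_def orthogonal_matrix_id)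
  next
    case (gen g) then show ?case using assms by blast
  next
    case (mult g h) then show ?case by (simp add: SO4_def orthogonal_matrix_mul det_mul)
  next
    case (inv g) then show ?case by (simp add: SO4_def orth_inv det_transpose)
  qed
qed

fun mpow :: "real^4^4 \<Rightarrow> nat \<Rightarrow> real^4^4" where
  "mpow g 0 = mat 1"
| "mpow g (Suc n) = g ** mpow g n"

lemma mpow_in: "g \<in> gen_group S \<Longrightarrow> mpow g (Suc n) \<in> gen_group S"
  by (induction n) (auto intro: gen_group.intros simp: matrix_mul_rid)

lemma rotm_comp:
  assumes "p \<bullet> p = 1" "q \<bullet> q = 1" "p \<bullet> q = 0"
  shows "rotm p q (cos s) (sin s) ** rotm p q (cos t) (sin t) = rotm p q (cos (s+t)) (sin (s+t))"
  by (rule mat_eqI) (simp add: matrix_vector_mul_assoc[symmetric] rotm_act rotc_comp[OF assms])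

lemma rotm_zero: "rotm p q (cos 0) (sin 0) = mat 1"
  by (rule mat_eqI) (simp add: rotm_act rotc_def)

lemma mpow_rotm:
  assumes "p \<bullet> p = 1" "q \<bullet> q = 1" "p \<bullet> q = 0"
  shows "mpow (rotm p q (cos x) (sin x)) n = rotm p q (cos (real n * x)) (sin (real n * x))"
proof (induction n)
  case 0 then show ?case using rotm_zero by simp
next
  case (Suc n)
  have "real (Suc n) * x = x + real n * x" by (simp add: algebra_simps)
  then show ?case using Suc by (simp add: rotm_comp[OF assms])
qed

lemma cont_rotm: "continuous_on UNIV (\<lambda>t. rotm p q (cos t) (sin t))"
  unfolding rotm_def by (intro continuous_intros)

lemma rot_dense:
  assumes pq: "p \<bullet> p = 1" "q \<bullet> q = 1" "p \<bullet> q = 0"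
    and irr: "x / (2*pi) \<notin> \<rat>"
    and g: "rotm p q (cos x) (sin x) \<in> gen_group S"
  shows "rotm p q (cos t) (sin t) \<in> closure (gen_group S)"
proof -
  define f where "f = (\<lambda>t. rotm p q (cos t) (sin t))"
  define T where "T = {real n * x - 2*pi * of_int h | n h. n > 0}"
  have fT: "f ` T \<subseteq> gen_group S"
  proof
    fix y assume "y \<in> f ` T"
    then obtain n h where n: "n > 0" and y: "y = f (real n * x - 2*pi * of_int h)" unfolding T_def by blast
    have c: "cos (a - 2*pi * of_int h) = cos a" "sin (a - 2*pi * of_int h) = sin a" for a
      by (simp_all add: cos_diff sin_diff)
    have "y = f (real n * x)" unfolding y f_def c ..
    also have "\<dots> = mpow (rotm p q (cos x) (sin x)) n" unfolding f_def mpow_rotm[OF pq] ..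
    also have "\<dots> \<in> gen_group S" using mpow_in[OF g, of "n - 1"] n by simp
    finally show "y \<in> gen_group S" .
  qed
  have tT: "t \<in> closure T"
    unfolding closure_approachable
  proof (intro allI impI)
    fix e :: real assume e: "e > 0"
    obtain h k where k: "k > 0" and hk: "\<bar>of_int k * (x / (2*pi)) - of_int h - t / (2*pi)\<bar> < e / (2*pi)"
    proof -
      have "e / (2*pi) > 0" using e by simp
      from sequence_of_fractional_parts_is_dense[OF irr this, of "t / (2*pi)"]
      show thesis using that by blast
    qed
    define n where "n = nat k"
    have nk: "real n = of_int k" using k by (simp add: n_def)
    have eq: "of_int k * (x / (2*pi)) - of_int h - t / (2*pi) = (real n * x - 2*pi * of_int h - t) / (2*pi)"
      unfolding nk by (simp add: field_simps)
    have "\<bar>real n * x - 2*pi * of_int h - t\<bar> / (2*pi) < e / (2*pi)"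
      using hk unfolding eq by (simp add: abs_divide)
    then have "\<bar>real n * x - 2*pi * of_int h - t\<bar> < e"
      by (simp add: divide_less_cancel)
    then have "dist (real n * x - 2*pi * of_int h) t < e" by (simp add: dist_real_def)
    moreover have "real n * x - 2*pi * of_int h \<in> T" unfolding T_def using k by (auto simp: n_def intro!: exI[of _ "nat k"])
    ultimately show "\<exists>y\<in>T. dist y t < e" by blast
  qed
  have "f ` closure T \<subseteq> closure (gen_group S)"
  proof (rule image_closure_subset)
    show "continuous_on (closure T) f" unfolding f_def using cont_rotm continuous_on_subset by blast
    show "f ` T \<subseteq> closure (gen_group S)" using fT closure_subset by blast
  qed simp
  then show ?thesis using tT unfolding f_def by blast
qed

lemma vector_4: "(vector [a,b,c,d] :: 'a::zero^4) $ 1 = a" "(vector [a,b,c,d] :: 'a::zero^4) $ 2 = b"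
  "(vector [a,b,c,d] :: 'a::zero^4) $ 3 = c" "(vector [a,b,c,d] :: 'a::zero^4) $ 4 = d"
  by (simp_all add: vector_def)

lemma tau_sq: "tau'^2 + tau^2 = 3" "tau^2 + tau'^2 = 3"
  by (simp_all add: tau_def tau'_def power2_eq_square field_simps)

lemma roots_unit:
  assumes t: "t'^2 + t^2 = 3" and a: "a \<in> roots t t'"
  shows "a \<bullet> a = 1"
proof -
  have sq: "s \<in> {-1, 1} \<Longrightarrow> s * s = (1::real)" for s by auto
  consider (f1) k s where "s \<in> {-1, 1}" "a = (\<chi> i. if i = k then s else 0)"
    | (f2) s where "\<forall>i. s i \<in> {-1, 1}" "a = (\<chi> i. s i / 2)"
    | (f3) s p where "\<forall>i. s i \<in> {-1, 1}" "p permutes (UNIV :: 4 set)"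
        "a = (\<chi> i. s (p i) * (vector [0, 1, t', t] :: real^4) $ (p i) / 2)"
    using a unfolding roots_def by blast
  then show ?thesis
  proof cases
    case f1
    then show ?thesis using exhaust_4[of k] sq[OF f1(1)] by (auto simp: inner4)
  next
    case f2
    then show ?thesis using sq f2(1) by (simp add: inner4 field_simps)
  next
    case f3
    define v where "v = (vector [0, 1, t', t] :: real^4)"
    have "a \<bullet> a = (\<Sum>i\<in>UNIV. (s (p i) * v $ (p i) / 2) * (s (p i) * v $ (p i) / 2))"
      unfolding f3(3) inner_vec_def v_def by simp
    also have "\<dots> = (\<Sum>i\<in>UNIV. ((v $ (p i))^2 / 4))"
      using sq f3(1) by (intro sum.cong) (auto simp: power2_eq_square field_simps)
    also have "\<dots> = (\<Sum>i\<in>UNIV. ((v $ i)^2 / 4))"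
      using sum.permute[OF f3(2), of "\<lambda>i. (v $ i)^2 / 4"] by (simp add: comp_def)
    also have "\<dots> = 1" unfolding sum_4 v_def vector_4 using t by simp
    finally show ?thesis .
  qed
qed

lemma Delta_unit: "a \<in> Delta \<union> Delta' \<Longrightarrow> a \<bullet> a = 1"
  unfolding Delta_def Delta'_def using roots_unit tau_sq by blast

lemma gen_group_mono: "T \<subseteq> gen_group S \<Longrightarrow> gen_group T \<subseteq> gen_group S"
proof
  fix g assume T: "T \<subseteq> gen_group S" and "g \<in> gen_group T"
  from this(2,1) show "g \<in> gen_group S"
    by induction (auto intro: gen_group.intros)
qed

lemma H4_sub: "H4 \<subseteq> Hinf" "H4' \<subseteq> Hinf"
  unfolding Hinf_def by (auto intro: gen_group.gen)

lemma reflmat_Hinf: "a \<in> Delta \<union> Delta' \<Longrightarrow> reflmat a \<in> Hinf"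
  using H4_sub unfolding H4_def H4'_def by (auto intro: gen_group.gen)

lemma O4_refl: "reflmat ` (Delta \<union> Delta') \<subseteq> O4"
  using Delta_unit reflmat_orth by (auto simp: O4_def)

lemma Hinf_O4: "Hinf \<subseteq> O4"
proof -
  have "H4 \<subseteq> O4" "H4' \<subseteq> O4" unfolding H4_def H4'_def
    using O4_refl by (auto intro!: gen_group_O4)
  then show ?thesis unfolding Hinf_def by (intro gen_group_O4) auto
qed

lemma Sigma_unit: "\<sigma> \<in> Sigma_roots \<Longrightarrow> \<sigma> \<bullet> \<sigma> = 1"
proof -
  assume "\<sigma> \<in> Sigma_roots"
  then obtain w a where w: "w \<in> Hinf" and a: "a \<in> Delta \<union> Delta'" and s: "\<sigma> = w *v a"
    unfolding Sigma_roots_def by blast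
  have "orthogonal_matrix w" using w Hinf_O4 by (auto simp: O4_def)
  then show ?thesis using orth_inner[of w a a] Delta_unit[OF a] s by simp
qed

lemma Sigma_refl: "\<sigma> \<in> Sigma_roots \<Longrightarrow> reflmat \<sigma> \<in> Hinf"
proof -
  assume "\<sigma> \<in> Sigma_roots"
  then obtain w a where w: "w \<in> Hinf" and a: "a \<in> Delta \<union> Delta'" and s: "\<sigma> = w *v a"
    unfolding Sigma_roots_def by blast
  have o: "orthogonal_matrix w" using w Hinf_O4 by (auto simp: O4_def)
  have "reflmat \<sigma> = w ** reflmat a ** matrix_inv w" unfolding s reflmat_conj[OF o] orth_inv[OF o] ..
  then show ?thesis
    using w reflmat_Hinf[OF a] unfolding Hinf_def by (auto intro: gen_group.intros)
qed

lemma Sigma_act: "g \<in> Hinf \<Longrightarrow> \<sigma> \<in> Sigma_roots \<Longrightarrow> g *v \<sigma> \<in> Sigma_roots"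
proof -
  assume g: "g \<in> Hinf" and "\<sigma> \<in> Sigma_roots"
  then obtain w a where w: "w \<in> Hinf" and a: "a \<in> Delta \<union> Delta'" and s: "\<sigma> = w *v a"
    unfolding Sigma_roots_def by blast
  have "g ** w \<in> Hinf" using g w unfolding Hinf_def by (rule gen_group.mult)
  moreover have "g *v \<sigma> = (g ** w) *v a" unfolding s matrix_vector_mul_assoc ..
  ultimately show ?thesis using a unfolding Sigma_roots_def by blast
qed

lemma Delta_Sigma: "a \<in> Delta \<union> Delta' \<Longrightarrow> a \<in> Sigma_roots"
  unfolding Sigma_roots_def Hinf_def
  by (auto intro!: exI[of _ "mat 1"] gen_group.one)

lemma refl_Sigma: "a \<in> Delta \<union> Delta' \<Longrightarrow> \<sigma> \<in> Sigma_roots \<Longrightarrow> rv a \<sigma> \<in> Sigma_roots"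
  using Sigma_act[OF reflmat_Hinf] reflmat_act by metis

lemma reflmat_inv: "a \<bullet> a = 1 \<Longrightarrow> matrix_inv (reflmat a) = reflmat a"
  using orth_inv[OF reflmat_orth] reflmat_transpose by simp

lemma plane_rot:
  assumes a: "a \<in> Sigma_roots" and b: "b \<in> Sigma_roots"
    and w: "a \<bullet> b = w" and w2: "w^2 < 1"
    and k: "32 * (8*w^4 - 8*w^2 + 1) = of_int k" "odd k"
    and p: "p = al *\<^sub>R a + be *\<^sub>R b" and q: "q = ga *\<^sub>R a + de *\<^sub>R b"
    and pp: "p \<bullet> p = 1" and qq: "q \<bullet> q = 1" and pq: "p \<bullet> q = 0"
  shows "rotm p q (cos t) (sin t) \<in> closure (commutator_subgroup Hinf)"
proof -
  have aa: "a \<bullet> a = 1" using Sigma_unit[OF a] .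
  have bb: "b \<bullet> b = 1" using Sigma_unit[OF b] .
  define rr where "rr = sqrt (1 - w^2)"
  have rr0: "rr > 0" using w2 by (simp add: rr_def)
  have rr2: "rr^2 = 1 - w^2" using w2 by (simp add: rr_def)
  define q0 where "q0 = (1/rr) *\<^sub>R (b - w *\<^sub>R a)"
  define c where "c = 8*w^4 - 8*w^2 + 1"
  define zn where "zn = -4*rr*w*(2*w^2-1)"
  have cz: "c^2 + zn^2 = 1" unfolding c_def zn_def using rr2 by algebra
  obtain psi where cpsi: "c = cos psi" and spsi: "zn = sin psi"
    using sincos_total_2pi[OF cz] by metis
  have cm: "reflmat a ** reflmat b ** reflmat a ** reflmat b = rotm a q0 (cos psi) (sin psi)"
  proof (rule mat_eqI)
    fix x
    have "(reflmat a ** reflmat b ** reflmat a ** reflmat b) *v x = rv a (rv b (rv a (rv b x)))"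
      by (simp add: matrix_vector_mul_assoc[symmetric] reflmat_act)
    also have "\<dots> = rotc a q0 c zn x"
      unfolding c_def zn_def by (rule comm_formula[OF aa bb w w2 rr_def q0_def])
    finally show "(reflmat a ** reflmat b ** reflmat a ** reflmat b) *v x = rotm a q0 (cos psi) (sin psi) *v x"
      by (simp add: rotm_act cpsi spsi)
  qed
  have gC: "rotm a q0 (cos psi) (sin psi) \<in> commutator_subgroup Hinf"
  proof -
    have "reflmat a ** reflmat b ** matrix_inv (reflmat a) ** matrix_inv (reflmat b) \<in>
        {g ** h ** matrix_inv g ** matrix_inv h | g h. g \<in> Hinf \<and> h \<in> Hinf}"
      using Sigma_refl[OF a] Sigma_refl[OF b] by blast
    then show ?thesis unfolding commutator_subgroup_def reflmat_inv[OF aa] reflmat_inv[OF bb] cm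
      by (rule gen_group.gen)
  qed
  have aq0: "a \<bullet> q0 = 0" unfolding q0_def using aa w by (simp add: inner_diff_right)
  have q0q0: "q0 \<bullet> q0 = 1"
  proof -
    have "q0 \<bullet> q0 = (1/rr^2) * ((b - w *\<^sub>R a) \<bullet> (b - w *\<^sub>R a))"
      unfolding q0_def by (simp add: power2_eq_square)
    also have "(b - w *\<^sub>R a) \<bullet> (b - w *\<^sub>R a) = 1 - w^2"
      using aa bb w by (simp add: inner_diff_left inner_diff_right inner_commute power2_eq_square)
    finally show ?thesis using rr2 rr0 w2 by simp
  qed
  have irr: "psi / (2*pi) \<notin> \<rat>"
    by (rule angle_irrational[OF _ k(2)]) (use k(1) cpsi c_def in simp)
  have dense: "rotm a q0 (cos s) (sin s) \<in> closure (commutator_subgroup Hinf)" for s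
    using rot_dense[OF aa q0q0 aq0 irr] gC unfolding commutator_subgroup_def by blast
  have bq: "b = w *\<^sub>R a + rr *\<^sub>R q0" unfolding q0_def using rr0 by (simp add: algebra_simps)
  have p': "p = (al + be*w) *\<^sub>R a + (be*rr) *\<^sub>R q0" unfolding p bq by (simp add: algebra_simps)
  have q': "q = (ga + de*w) *\<^sub>R a + (de*rr) *\<^sub>R q0" unfolding q bq by (simp add: algebra_simps)
  obtain e where e: "e = 1 \<or> e = -1" and rot: "\<And>c s x. rotc p q c s x = rotc a q0 c (e * s) x"
    using rotc_basis[OF aa q0q0 aq0 p' q' pp qq pq] by blast
  have "rotm p q (cos t) (sin t) = rotm a q0 (cos (e*t)) (sin (e*t))"
    by (rule mat_eqI) (use e in \<open>auto simp: rotm_act rot\<close>)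
  then show ?thesis using dense by simp
qed

lemma cont_mv: "continuous_on UNIV (\<lambda>z::(real^4^4) \<times> (real^4). fst z *v snd z)"
  unfolding matrix_vector_mult_def by (intro continuous_intros)

lemma cont_mm: "continuous_on UNIV (\<lambda>z::(real^4^4) \<times> (real^4^4). fst z ** snd z)"
  unfolding matrix_matrix_mult_def by (intro continuous_intros)

lemma cont_refl: "continuous_on UNIV (\<lambda>a. reflmat a)"
  unfolding reflmat_def by (intro continuous_intros)

lemma closure_act:
  fixes G :: "(real^4^4) set" and Y :: "(real^4) set"
  assumes "\<And>A y. A \<in> G \<Longrightarrow> y \<in> Y \<Longrightarrow> A *v y \<in> Y"
  shows "A \<in> closure G \<Longrightarrow> y \<in> closure Y \<Longrightarrow> A *v y \<in> closure Y"
proof -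
  define f where "f = (\<lambda>z::(real^4^4) \<times> (real^4). fst z *v snd z)"
  have "f ` closure (G \<times> Y) \<subseteq> closure Y"
  proof (rule image_closure_subset)
    show "continuous_on (closure (G \<times> Y)) f" unfolding f_def using cont_mv continuous_on_subset by blast
    show "f ` (G \<times> Y) \<subseteq> closure Y" using assms closure_subset unfolding f_def by fastforce
  qed simp
  then show "A \<in> closure G \<Longrightarrow> y \<in> closure Y \<Longrightarrow> A *v y \<in> closure Y"
    unfolding closure_Times f_def by force
qed

lemma closure_mult:
  fixes G :: "(real^4^4) set"
  assumes "\<And>A B. A \<in> G \<Longrightarrow> B \<in> G \<Longrightarrow> A ** B \<in> G"
  shows "A \<in> closure G \<Longrightarrow> B \<in> closure G \<Longrightarrow> A ** B \<in> closure G"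
proof -
  define f where "f = (\<lambda>z::(real^4^4) \<times> (real^4^4). fst z ** snd z)"
  have "f ` closure (G \<times> G) \<subseteq> closure G"
  proof (rule image_closure_subset)
    show "continuous_on (closure (G \<times> G)) f" unfolding f_def using cont_mm continuous_on_subset by blast
    show "f ` (G \<times> G) \<subseteq> closure G" using assms closure_subset unfolding f_def by fastforce
  qed simp
  then show "A \<in> closure G \<Longrightarrow> B \<in> closure G \<Longrightarrow> A ** B \<in> closure G"
    unfolding closure_Times f_def by force
qed

lemma closure_refl:
  fixes G :: "(real^4^4) set" and Y :: "(real^4) set"
  assumes "\<And>a. a \<in> Y \<Longrightarrow> reflmat a \<in> G"
  shows "a \<in> closure Y \<Longrightarrow> reflmat a \<in> closure G"
proof -
  have "reflmat ` closure Y \<subseteq> closure G"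
  proof (rule image_closure_subset)
    show "continuous_on (closure Y) reflmat" using cont_refl continuous_on_subset by blast
    show "reflmat ` Y \<subseteq> closure G" using assms closure_subset by fastforce
  qed simp
  then show "a \<in> closure Y \<Longrightarrow> reflmat a \<in> closure G" by blast
qed

lemma closure_comm:
  fixes G :: "(real^4^4) set" and Y :: "(real^4) set"
  assumes "\<And>a b. a \<in> Y \<Longrightarrow> b \<in> Y \<Longrightarrow> reflmat a ** reflmat b ** reflmat a ** reflmat b \<in> G"
  shows "a \<in> closure Y \<Longrightarrow> b \<in> closure Y \<Longrightarrow> reflmat a ** reflmat b ** reflmat a ** reflmat b \<in> closure G"
proof -
  define f where "f = (\<lambda>z::(real^4) \<times> (real^4). reflmat (fst z) ** reflmat (snd z) ** reflmat (fst z) ** reflmat (snd z))"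
  have "f ` closure (Y \<times> Y) \<subseteq> closure G"
  proof (rule image_closure_subset)
    show "continuous_on (closure (Y \<times> Y)) f" unfolding f_def matrix_matrix_mult_def reflmat_def
      by (intro continuous_intros)
    show "f ` (Y \<times> Y) \<subseteq> closure G" using assms closure_subset unfolding f_def by fastforce
  qed simp
  then show "a \<in> closure Y \<Longrightarrow> b \<in> closure Y \<Longrightarrow> reflmat a ** reflmat b ** reflmat a ** reflmat b \<in> closure G"
    unfolding closure_Times f_def by force
qed

lemma polar: "\<exists>t. x = sqrt (x^2 + y^2) * cos t \<and> y = sqrt (x^2 + y^2) * sin t"
proof (cases "x^2 + y^2 = 0")
  case True then show ?thesis by simp
next
  case False
  define r where "r = sqrt (x^2 + y^2)"
  have r0: "r > 0" using False unfolding r_def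
    by (simp add: add_nonneg_nonneg order_le_neq_trans)
  have r2: "r^2 = x^2 + y^2" unfolding r_def by simp
  have "(x/r)^2 + (y/r)^2 = (x^2 + y^2) / r^2" by (simp add: power_divide add_divide_distrib)
  then have "(x/r)^2 + (y/r)^2 = 1" using r0 r2 False by simp
  then obtain t where "x/r = cos t" "y/r = sin t" using sincos_total_2pi by metis
  then show ?thesis using r0 unfolding r_def[symmetric] by (auto simp: field_simps)
qed

lemma root3I: "\<forall>i. s i \<in> {-1, 1} \<Longrightarrow> p permutes UNIV \<Longrightarrow> evenperm p \<Longrightarrow>
   a = (\<chi> i. s (p i) * (vector [0, 1, t', t] :: real^4) $ (p i) / 2) \<Longrightarrow> a \<in> roots t t'"
  unfolding roots_def by blast

definition U :: "real^4" where "U = vector [0, 1/2, tau'/2, tau/2]"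
definition V :: "real^4" where "V = vector [0, 1/2, tau/2, tau'/2]"
definition E1 :: "real^4" where "E1 = vector [1, 0, 0, 0]"
definition R0 :: "real^4" where "R0 = vector [1/2, 0, - tau'/2, - tau/2]"
definition R1 :: "real^4" where "R1 = vector [0, tau'/2, tau/2, 1/2]"
definition X0 :: "real^4" where "X0 = vector [1/2, - tau'/2, tau/2, 0]"
definition X1 :: "real^4" where "X1 = vector [tau'/2, 0, tau/2, -1/2]"
definition Bp :: "real^4" where "Bp = vector [0, 1/2, tau'/2, - tau/2]"

lemma U_in: "U \<in> Delta"
  unfolding Delta_def
  by (rule root3I[where s="\<lambda>i. 1" and p=id]) (auto simp: U_def vec_eq_iff forall_4 vector_4)

lemma V_in: "V \<in> Delta'"
  unfolding Delta'_def
  by (rule root3I[where s="\<lambda>i. 1" and p=id]) (auto simp: V_def vec_eq_iff forall_4 vector_4)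

lemma Bp_in: "Bp \<in> Delta"
  unfolding Delta_def
  by (rule root3I[where s="\<lambda>i. if i = 4 then -1 else 1" and p=id]) (auto simp: Bp_def vec_eq_iff forall_4 vector_4)

lemma E1_in: "E1 \<in> Delta"
proof -
  have "E1 = (\<chi> i. if i = 1 then 1 else 0)" by (simp add: E1_def vec_eq_iff forall_4 vector_4)
  then show ?thesis unfolding Delta_def roots_def by blast
qed

lemma R0_in: "R0 \<in> Delta'"
  unfolding Delta'_def
  by (rule root3I[where s="\<lambda>i. if i = 3 \<or> i = 4 then -1 else 1"
        and p="Transposition.transpose 1 2 \<circ> Transposition.transpose 3 4"])
     (auto simp: R0_def vec_eq_iff forall_4 vector_4 Transposition.transpose_def evenperm_comp
       permutation_swap_id evenperm_swap intro!: permutes_compose permutes_swap_id)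

lemma R1_in: "R1 \<in> Delta"
  unfolding Delta_def
  by (rule root3I[where s="\<lambda>i. 1"
        and p="Transposition.transpose 2 3 \<circ> Transposition.transpose 3 4"])
     (auto simp: R1_def vec_eq_iff forall_4 vector_4 Transposition.transpose_def evenperm_comp
       permutation_swap_id evenperm_swap intro!: permutes_compose permutes_swap_id)

lemma X0_in: "X0 \<in> Delta'"
  unfolding Delta'_def
  by (rule root3I[where s="\<lambda>i. if i = 4 then -1 else 1"
        and p="Transposition.transpose 1 2 \<circ> Transposition.transpose 2 4"])
     (auto simp: X0_def vec_eq_iff forall_4 vector_4 Transposition.transpose_def evenperm_comp
       permutation_swap_id evenperm_swap intro!: permutes_compose permutes_swap_id)

lemma X1_in: "X1 \<in> Delta'"
  unfolding Delta'_def
  by (rule root3I[where s="\<lambda>i. if i = 2 then -1 else 1"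
        and p="Transposition.transpose 1 4 \<circ> Transposition.transpose 4 2"])
     (auto simp: X1_def vec_eq_iff forall_4 vector_4 Transposition.transpose_def evenperm_comp
       permutation_swap_id evenperm_swap intro!: permutes_compose permutes_swap_id)

definition dd :: "real^4" where "dd = vector [3/4, (-1 + 3 * sqrt 5)/16, (2 + sqrt 5)/8, (-5 + sqrt 5)/16]"
definition xx :: "real^4" where "xx = vector [1/4, sqrt 5/4, - sqrt 5/4, - sqrt 5/4]"

lemma dd_eq: "rv R1 (rv R0 U) = dd"
  unfolding vec_eq_iff forall_4 rv_def inner4 R1_def R0_def U_def dd_def tau_def tau'_def
  by (simp add: vector_4 field_simps; algebra)

lemma xx_eq: "rv X1 (rv X0 Bp) = xx"
  unfolding vec_eq_iff forall_4 rv_def inner4 X1_def X0_def Bp_def xx_def tau_def tau'_def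
  by (simp add: vector_4 field_simps; algebra)

lemma in_Sigma: "U \<in> Sigma_roots" "V \<in> Sigma_roots" "E1 \<in> Sigma_roots" "dd \<in> Sigma_roots" "xx \<in> Sigma_roots"
proof -
  show U: "U \<in> Sigma_roots" using Delta_Sigma U_in by blast
  show "V \<in> Sigma_roots" using Delta_Sigma V_in by blast
  show "E1 \<in> Sigma_roots" using Delta_Sigma E1_in by blast
  show "dd \<in> Sigma_roots" unfolding dd_eq[symmetric]
    using refl_Sigma R0_in R1_in U by blast
  have "Bp \<in> Sigma_roots" using Delta_Sigma Bp_in by blast
  then show "xx \<in> Sigma_roots" unfolding xx_eq[symmetric]
    using refl_Sigma X0_in X1_in by blast
qed

lemma inners: "U \<bullet> V = -1/4" "E1 \<bullet> dd = 3/4" "E1 \<bullet> xx = 1/4"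
proof -
  show "U \<bullet> V = -1/4"
    by (simp add: inner4 U_def V_def vector_4 tau_def tau'_def field_simps; algebra)
  show "E1 \<bullet> dd = 3/4" by (simp add: inner4 E1_def dd_def vector_4)
  show "E1 \<bullet> xx = 1/4" by (simp add: inner4 E1_def xx_def vector_4)
qed

definition g1 :: "real^4" where "g1 = vector [0, -9 - sqrt 5, -6 + 4 * sqrt 5, -3 - 5 * sqrt 5]"
definition g2 :: "real^4" where "g2 = vector [0, -1 + 3 * sqrt 5, 4 + 2 * sqrt 5, -5 + sqrt 5]"
definition g4 :: "real^4" where "g4 = vector [0, 1, -1, -1]"
definition f1 :: "real^4" where "f1 = (1 / sqrt 336) *\<^sub>R g1"
definition f2 :: "real^4" where "f2 = (1 / sqrt 112) *\<^sub>R g2"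
definition f4 :: "real^4" where "f4 = (1 / sqrt 3) *\<^sub>R g4"

lemma g_inners: "g1 \<bullet> g1 = 336" "g2 \<bullet> g2 = 112" "g4 \<bullet> g4 = 3" "g1 \<bullet> g2 = 0" "g1 \<bullet> g4 = 0"
  "g2 \<bullet> g4 = 0" "E1 \<bullet> g1 = 0" "E1 \<bullet> g2 = 0" "E1 \<bullet> g4 = 0" "E1 \<bullet> E1 = 1"
  by (simp_all add: inner4 g1_def g2_def g4_def E1_def vector_4 algebra_simps power2_eq_square)

lemma f_inners: "f1 \<bullet> f1 = 1" "f2 \<bullet> f2 = 1" "f4 \<bullet> f4 = 1" "E1 \<bullet> E1 = 1"
  "f1 \<bullet> f2 = 0" "f2 \<bullet> f1 = 0" "f1 \<bullet> f4 = 0" "f4 \<bullet> f1 = 0" "f2 \<bullet> f4 = 0" "f4 \<bullet> f2 = 0"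
  "E1 \<bullet> f1 = 0" "E1 \<bullet> f2 = 0" "E1 \<bullet> f4 = 0" "f1 \<bullet> E1 = 0" "f2 \<bullet> E1 = 0" "f4 \<bullet> E1 = 0"
proof -
  have c: "g2 \<bullet> g1 = 0" "g4 \<bullet> g1 = 0" "g4 \<bullet> g2 = 0" "g1 \<bullet> E1 = 0" "g2 \<bullet> E1 = 0" "g4 \<bullet> E1 = 0"
    using g_inners by (simp_all add: inner_commute)
  show "f1 \<bullet> f1 = 1" "f2 \<bullet> f2 = 1" "f4 \<bullet> f4 = 1" "E1 \<bullet> E1 = 1"
  "f1 \<bullet> f2 = 0" "f2 \<bullet> f1 = 0" "f1 \<bullet> f4 = 0" "f4 \<bullet> f1 = 0" "f2 \<bullet> f4 = 0" "f4 \<bullet> f2 = 0"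
  "E1 \<bullet> f1 = 0" "E1 \<bullet> f2 = 0" "E1 \<bullet> f4 = 0" "f1 \<bullet> E1 = 0" "f2 \<bullet> E1 = 0" "f4 \<bullet> E1 = 0"
    by (simp_all add: f1_def f2_def f4_def g_inners c)
qed

lemma g_span1: "g1 = (-18 - 2/5 * sqrt 5) *\<^sub>R U + (-8/5 * sqrt 5) *\<^sub>R V"
  by (simp add: vec_eq_iff forall_4 g1_def U_def V_def vector_4 tau_def tau'_def field_simps; algebra)
lemma g_span2: "g2 = (-2 + 6/5 * sqrt 5) *\<^sub>R U + (24/5 * sqrt 5) *\<^sub>R V"
  by (simp add: vec_eq_iff forall_4 g2_def U_def V_def vector_4 tau_def tau'_def field_simps; algebra)
lemma g_span3: "g2 = (-12) *\<^sub>R E1 + 16 *\<^sub>R dd"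
  by (simp add: vec_eq_iff forall_4 g2_def E1_def dd_def vector_4)
lemma g_span4: "g4 = (- sqrt 5 / 5) *\<^sub>R E1 + (4 * sqrt 5 / 5) *\<^sub>R xx"
  by (simp add: vec_eq_iff forall_4 g4_def E1_def xx_def vector_4)

lemma sc2: fixes a b :: "real^4" shows "(k::real) *\<^sub>R (A *\<^sub>R a + B *\<^sub>R b) = (k*A) *\<^sub>R a + (k*B) *\<^sub>R b"
  by (simp add: algebra_simps)

lemma f_span: "f1 = ((-18 - 2/5 * sqrt 5) / sqrt 336) *\<^sub>R U + ((-8/5 * sqrt 5) / sqrt 336) *\<^sub>R V"
  "f2 = ((-2 + 6/5 * sqrt 5) / sqrt 112) *\<^sub>R U + ((24/5 * sqrt 5) / sqrt 112) *\<^sub>R V"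
  "f2 = (-12 / sqrt 112) *\<^sub>R E1 + (16 / sqrt 112) *\<^sub>R dd"
  "f4 = ((- sqrt 5 / 5) / sqrt 3) *\<^sub>R E1 + ((4 * sqrt 5 / 5) / sqrt 3) *\<^sub>R xx"
  "E1 = 1 *\<^sub>R E1 + 0 *\<^sub>R dd" "E1 = 1 *\<^sub>R E1 + 0 *\<^sub>R xx"
proof -
  show "f1 = ((-18 - 2/5 * sqrt 5) / sqrt 336) *\<^sub>R U + ((-8/5 * sqrt 5) / sqrt 336) *\<^sub>R V"
    unfolding f1_def g_span1 sc2 by simp
  show "f2 = ((-2 + 6/5 * sqrt 5) / sqrt 112) *\<^sub>R U + ((24/5 * sqrt 5) / sqrt 112) *\<^sub>R V"
    unfolding f2_def g_span2 sc2 by simp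
  show "f2 = (-12 / sqrt 112) *\<^sub>R E1 + (16 / sqrt 112) *\<^sub>R dd"
    unfolding f2_def g_span3 sc2 by simp
  show "f4 = ((- sqrt 5 / 5) / sqrt 3) *\<^sub>R E1 + ((4 * sqrt 5 / 5) / sqrt 3) *\<^sub>R xx"
    unfolding f4_def g_span4 sc2 by (simp add: mult.commute)
qed simp_all

abbreviation "CC \<equiv> commutator_subgroup Hinf"

lemma C_sub_Hinf: "CC \<subseteq> Hinf"
proof -
  have s: "{g ** h ** matrix_inv g ** matrix_inv h |g h. g \<in> Hinf \<and> h \<in> Hinf} \<subseteq> gen_group (H4 \<union> H4')"
    unfolding Hinf_def by (auto intro!: gen_group.mult gen_group.inv)
  show ?thesis using gen_group_mono[OF s] unfolding commutator_subgroup_def Hinf_def .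
qed

lemma rot1: "rotm f2 f1 (cos t) (sin t) \<in> closure CC"
  by (rule plane_rot[OF in_Sigma(1) in_Sigma(2) inners(1) _ _ _ f_span(2) f_span(1), where k=17])
     (simp_all add: f_inners power2_eq_square power_divide)

lemma rot2: "rotm E1 f2 (cos t) (sin t) \<in> closure CC"
  by (rule plane_rot[OF in_Sigma(3) in_Sigma(4) inners(2) _ _ _ f_span(5) f_span(3), where k="-31"])
     (simp_all add: f_inners power2_eq_square power_divide)

lemma rot3: "rotm E1 f4 (cos t) (sin t) \<in> closure CC"
  by (rule plane_rot[OF in_Sigma(3) in_Sigma(5) inners(3) _ _ _ f_span(6) f_span(4), where k=17])
     (simp_all add: f_inners power2_eq_square power_divide)

lemma span4:
  assumes "E1 \<bullet> z = 0" "f1 \<bullet> z = 0" "f2 \<bullet> z = 0" "f4 \<bullet> z = 0"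
  shows "z = 0"
proof -
  have "g1 \<bullet> z = 0" "g2 \<bullet> z = 0" "g4 \<bullet> z = 0"
    using assms by (simp_all add: f1_def f2_def f4_def)
  then have h: "z$1 = 0" "(-9 - sqrt 5) * z$2 + (-6 + 4 * sqrt 5) * z$3 + (-3 - 5 * sqrt 5) * z$4 = 0"
    "(-1 + 3 * sqrt 5) * z$2 + (4 + 2 * sqrt 5) * z$3 + (-5 + sqrt 5) * z$4 = 0"
    "z$2 - z$3 - z$4 = 0"
    using assms(1) by (simp_all add: inner4 E1_def g1_def g2_def g4_def vector_4)
  have s: "sqrt 5 * sqrt 5 = (5::real)" by simp
  have "z$3 = 0" using h(2-4) s by algebra
  moreover have "z$4 = 0" using h(2-4) s by algebra
  moreover have "z$2 = 0" using h(2-4) s by algebra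
  ultimately show ?thesis using h(1) by (simp add: vec_eq_iff forall_4)
qed

lemma Hinf_act: "A \<in> closure Hinf \<Longrightarrow> y \<in> closure Sigma_roots \<Longrightarrow> A *v y \<in> closure Sigma_roots"
  by (rule closure_act[OF Sigma_act])

lemma CC_act: "A \<in> closure CC \<Longrightarrow> y \<in> closure Sigma_roots \<Longrightarrow> A *v y \<in> closure Sigma_roots"
  using Hinf_act closure_mono[OF C_sub_Hinf] by blast

lemma sphere_sub:
  assumes y: "norm y = 1"
  shows "y \<in> closure Sigma_roots"
proof -
  define c1 where "c1 = f1 \<bullet> y"
  define c2 where "c2 = f2 \<bullet> y"
  define c3 where "c3 = E1 \<bullet> y"
  define c4 where "c4 = f4 \<bullet> y"
  note fi = f_inners
  have ye: "y = c1 *\<^sub>R f1 + c2 *\<^sub>R f2 + c3 *\<^sub>R E1 + c4 *\<^sub>R f4"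
  proof -
    define z where "z = y - (c1 *\<^sub>R f1 + c2 *\<^sub>R f2 + c3 *\<^sub>R E1 + c4 *\<^sub>R f4)"
    have "z = 0"
      by (rule span4) (simp_all add: z_def inner_diff_right inner_add_right fi c1_def c2_def c3_def c4_def)
    then show ?thesis unfolding z_def by simp
  qed
  have n: "c1^2 + c2^2 + c3^2 + c4^2 = 1"
  proof -
    have "y \<bullet> y = 1" using y by (simp add: norm_eq_1)
    then have "y \<bullet> (c1 *\<^sub>R f1 + c2 *\<^sub>R f2 + c3 *\<^sub>R E1 + c4 *\<^sub>R f4) = 1"
      using ye by simp
    then show ?thesis
      by (simp add: inner_add_right inner_commute c1_def c2_def c3_def c4_def power2_eq_square)
  qed
  define a where "a = sqrt (c3^2 + c4^2)"
  define b where "b = sqrt (c1^2 + c2^2)"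
  have "a^2 + b^2 = 1" unfolding a_def b_def using n by simp
  then obtain be where a: "a = cos be" and b: "b = sin be" using sincos_total_2pi by metis
  obtain ga where c3: "c3 = a * cos ga" and c4: "c4 = a * sin ga" using polar[of c3 c4] unfolding a_def by blast
  obtain al where c2: "c2 = b * cos al" and c1: "c1 = b * sin al" using polar[of c2 c1] unfolding b_def by (metis add.commute)
  have E1S: "E1 \<in> closure Sigma_roots" using in_Sigma(3) closure_subset by blast
  have y1: "rotm E1 f2 (cos be) (sin be) *v E1 = cos be *\<^sub>R E1 + sin be *\<^sub>R f2"
    by (simp add: rotm_act rotc_p fi)
  have y2: "rotm f2 f1 (cos al) (sin al) *v (cos be *\<^sub>R E1 + sin be *\<^sub>R f2)
      = cos be *\<^sub>R E1 + sin be *\<^sub>R (cos al *\<^sub>R f2 + sin al *\<^sub>R f1)"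
    by (simp add: rotm_act rotc_add rotc_scale rotc_p rotc_perp fi)
  have y3: "rotm E1 f4 (cos ga) (sin ga) *v (cos be *\<^sub>R E1 + sin be *\<^sub>R (cos al *\<^sub>R f2 + sin al *\<^sub>R f1))
      = cos be *\<^sub>R (cos ga *\<^sub>R E1 + sin ga *\<^sub>R f4) + sin be *\<^sub>R (cos al *\<^sub>R f2 + sin al *\<^sub>R f1)"
    by (simp add: rotm_act rotc_add rotc_scale rotc_p rotc_perp fi)
  have yy: "y = cos be *\<^sub>R (cos ga *\<^sub>R E1 + sin ga *\<^sub>R f4) + sin be *\<^sub>R (cos al *\<^sub>R f2 + sin al *\<^sub>R f1)"
    unfolding ye c1 c2 c3 c4 a[symmetric] b[symmetric] by (simp add: algebra_simps)
  show ?thesis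
    unfolding yy y3[symmetric] y2[symmetric] y1[symmetric]
    by (intro CC_act rot1 rot2 rot3 E1S)
qed

lemma part3: "closure Sigma_roots = sphere (0::real^4) 1"
proof
  show "closure Sigma_roots \<subseteq> sphere 0 1"
  proof (rule closure_minimal)
    show "Sigma_roots \<subseteq> sphere 0 1" using Sigma_unit by (auto simp: norm_eq_1)
  qed simp
  show "sphere 0 1 \<subseteq> closure Sigma_roots" using sphere_sub by auto
qed

definition FF :: "(real^4^4) set" where "FF = {mat 1} \<union> {reflmat u | u. u \<bullet> u = 1}"

lemma FF_sq: "M \<in> FF \<Longrightarrow> M ** M = mat 1"
  unfolding FF_def by (auto simp: reflmat_sq matrix_mul_lid)

lemma FF_orth: "M \<in> FF \<Longrightarrow> orthogonal_matrix M"
  unfolding FF_def by (auto simp: reflmat_orth orthogonal_matrix_id)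

lemma refl_swap:
  fixes u v :: "real^4"
  assumes uu: "u \<bullet> u = 1" and vv: "v \<bullet> v = 1" and uv: "u \<noteq> v"
    and w: "w = (1 / norm (u - v)) *\<^sub>R (u - v)"
  shows "w \<bullet> w = 1" "rv w u = v" "\<And>z. z \<bullet> u = 0 \<Longrightarrow> z \<bullet> v = 0 \<Longrightarrow> rv w z = z"
proof -
  define n where "n = norm (u - v)"
  have n0: "n > 0" using uv by (simp add: n_def)
  have n2: "n^2 = 2 - 2 * (u \<bullet> v)"
    unfolding n_def power2_norm_eq_inner using uu vv
    by (simp add: inner_diff_left inner_diff_right inner_commute)
  show "w \<bullet> w = 1" unfolding w n_def[symmetric] using n0
    by (simp add: power2_norm_eq_inner[symmetric] n_def power2_eq_square)
  have wu: "w \<bullet> u = (1 - u \<bullet> v) / n" unfolding w n_def[symmetric] using uu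
    by (simp add: inner_diff_left inner_diff_right inner_commute)
  have "rv w u = u - (2 * ((1 - u \<bullet> v) / n) / n) *\<^sub>R (u - v)"
    unfolding rv_def wu unfolding w n_def[symmetric] by simp
  also have "2 * ((1 - u \<bullet> v) / n) / n = 1"
    using n0 n2 by (simp add: field_simps power2_eq_square)
  finally show "rv w u = v" by simp
  show "rv w z = z" if "z \<bullet> u = 0" "z \<bullet> v = 0" for z
    using that unfolding rv_def w by (simp add: inner_diff_right inner_commute)
qed

lemma hstep:
  fixes x y :: "real^4"
  assumes "norm x = 1" "norm y = 1"
  shows "\<exists>M\<in>FF. M *v x = y \<and> (\<forall>z. z \<bullet> x = 0 \<longrightarrow> z \<bullet> y = 0 \<longrightarrow> M *v z = z)"
proof (cases "x = y")
  case True then show ?thesis by (auto simp: FF_def)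
next
  case False
  define w where "w = (1 / norm (x - y)) *\<^sub>R (x - y)"
  have xx: "x \<bullet> x = 1" "y \<bullet> y = 1" using assms by (simp_all add: norm_eq_1)
  note r = refl_swap[OF xx False w_def]
  have "reflmat w \<in> FF" using r(1) by (auto simp: FF_def)
  then show ?thesis using r(2,3) by (intro bexI[of _ "reflmat w"]) (auto simp: reflmat_act)
qed

abbreviation "ee k \<equiv> (axis k (1::real) :: real^4)"

lemma hh_step:
  assumes B: "orthogonal_matrix B" and J: "\<forall>j\<in>J. B *v ee j = ee j" and k: "k \<notin> J"
  shows "\<exists>M\<in>FF. (\<forall>j\<in>insert k J. (M ** B) *v ee j = ee j) \<and> orthogonal_matrix (M ** B) \<and> B = M ** (M ** B)"
proof -
  have nx: "norm (B *v ee k) = 1" using orth_norm[OF B] by simp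
  obtain M where M: "M \<in> FF" "M *v (B *v ee k) = ee k"
     and Mz: "\<And>z. z \<bullet> (B *v ee k) = 0 \<Longrightarrow> z \<bullet> ee k = 0 \<Longrightarrow> M *v z = z"
    using hstep[OF nx, of "ee k"] by auto
  have "(M ** B) *v ee j = ee j" if j: "j \<in> insert k J" for j
  proof (cases "j = k")
    case True then show ?thesis using M(2) by (simp add: matrix_vector_mul_assoc[symmetric])
  next
    case False
    then have jJ: "j \<in> J" using j by simp
    have "ee j \<bullet> (B *v ee k) = 0"
      using orth_inner[OF B, of "ee j" "ee k"] J jJ False by (simp add: inner_axis_axis)
    moreover have "ee j \<bullet> ee k = 0" using False by (simp add: inner_axis_axis)
    ultimately have "M *v ee j = ee j" using Mz by blast
    then show ?thesis using J jJ by (simp add: matrix_vector_mul_assoc[symmetric])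
  qed
  moreover have "orthogonal_matrix (M ** B)" using FF_orth[OF M(1)] B by (rule orthogonal_matrix_mul)
  moreover have "B = M ** (M ** B)" using FF_sq[OF M(1)] by (simp add: matrix_mul_assoc matrix_mul_lid)
  ultimately show ?thesis using M(1) by blast
qed

lemma fix_all: assumes "\<forall>j. (B::real^4^4) *v ee j = ee j" shows "B = mat 1"
proof -
  have "B $ i $ j = mat 1 $ i $ j" for i j
  proof -
    have "B $ i $ j = (B *v ee j) $ i" by (simp add: matrix_vector_mult_basis column_def)
    also have "\<dots> = mat 1 $ i $ j" using assms by (simp add: axis_def mat_def)
    finally show ?thesis .
  qed
  then show ?thesis by (simp add: vec_eq_iff)
qed

lemma UNIV4: "(UNIV::4 set) = insert 4 (insert 3 (insert 2 (insert 1 {})))"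
  using exhaust_4 by auto

lemma HH: assumes A: "orthogonal_matrix A"
  shows "\<exists>M1\<in>FF. \<exists>M2\<in>FF. \<exists>M3\<in>FF. \<exists>M4\<in>FF. A = M1 ** (M2 ** (M3 ** M4))"
proof -
  obtain M1 where M1: "M1 \<in> FF" "\<forall>j\<in>{1}. (M1 ** A) *v ee j = ee j" "orthogonal_matrix (M1 ** A)"
    "A = M1 ** (M1 ** A)"
    using hh_step[OF A, of "{}" 1] by auto
  obtain M2 where M2: "M2 \<in> FF" "\<forall>j\<in>{2,1}. (M2 ** (M1 ** A)) *v ee j = ee j"
    "orthogonal_matrix (M2 ** (M1 ** A))" "M1 ** A = M2 ** (M2 ** (M1 ** A))"
    using hh_step[OF M1(3) M1(2), of 2] by auto
  obtain M3 where M3: "M3 \<in> FF" "\<forall>j\<in>{3,2,1}. (M3 ** (M2 ** (M1 ** A))) *v ee j = ee j"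
    "orthogonal_matrix (M3 ** (M2 ** (M1 ** A)))" "M2 ** (M1 ** A) = M3 ** (M3 ** (M2 ** (M1 ** A)))"
    using hh_step[OF M2(3) M2(2), of 3] by auto
  obtain M4 where M4: "M4 \<in> FF" "\<forall>j\<in>{4,3,2,1}. (M4 ** (M3 ** (M2 ** (M1 ** A)))) *v ee j = ee j"
    "M3 ** (M2 ** (M1 ** A)) = M4 ** (M4 ** (M3 ** (M2 ** (M1 ** A))))"
    using hh_step[OF M3(3) M3(2), of 4] by auto
  have "M4 ** (M3 ** (M2 ** (M1 ** A))) = mat 1"
    using M4(2) unfolding UNIV4[symmetric] by (intro fix_all) auto
  then have "A = M1 ** (M2 ** (M3 ** (M4 ** mat 1)))" using M1(4) M2(4) M3(4) M4(3) by metis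
  then show ?thesis using M1(1) M2(1) M3(1) M4(1) by (auto simp: matrix_mul_rid)
qed

lemma closed_O4: "closed O4"
proof -
  have e: "O4 = {A. transpose A ** A = (mat 1 :: real^4^4)}" unfolding O4_def
    by (rule set_eqI) (simp add: orthogonal_matrix)
  have c: "continuous_on UNIV (\<lambda>A::real^4^4. transpose A ** A)"
    unfolding transpose_def matrix_matrix_mult_def by (intro continuous_intros)
  show ?thesis unfolding e by (rule closed_Collect_eq[OF c continuous_on_const])
qed

lemma closed_SO4: "closed SO4"
proof -
  have e: "SO4 = O4 \<inter> {A. det A = (1::real)}" unfolding SO4_def O4_def by auto
  have c: "continuous_on UNIV (\<lambda>A::real^4^4. det A)"
    unfolding det_def by (intro continuous_intros)
  have "closed {A::real^4^4. det A = (1::real)}" by (rule closed_Collect_eq[OF c continuous_on_const])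
  then show ?thesis unfolding e using closed_O4 by (intro closed_Int)
qed

lemma Hinf_mult: "A \<in> closure Hinf \<Longrightarrow> B \<in> closure Hinf \<Longrightarrow> A ** B \<in> closure Hinf"
  by (rule closure_mult) (auto simp: Hinf_def intro: gen_group.mult)

lemma CC_mult: "A \<in> closure CC \<Longrightarrow> B \<in> closure CC \<Longrightarrow> A ** B \<in> closure CC"
  by (rule closure_mult) (auto simp: commutator_subgroup_def intro: gen_group.mult)

lemma unit_closure: "u \<bullet> u = 1 \<Longrightarrow> u \<in> closure Sigma_roots"
  using part3 by (simp add: norm_eq_1)

lemma FF_Hinf: "M \<in> FF \<Longrightarrow> M \<in> closure Hinf"
proof -
  assume "M \<in> FF"
  then consider "M = mat 1" | u where "u \<bullet> u = 1" "M = reflmat u" unfolding FF_def by blast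
  then show ?thesis
  proof cases
    case 1 then show ?thesis using closure_subset gen_group.one unfolding Hinf_def by blast
  next
    case 2 then show ?thesis using closure_refl[OF Sigma_refl] unit_closure by blast
  qed
qed

lemma part2: "closure Hinf = O4"
proof
  show "closure Hinf \<subseteq> O4" using Hinf_O4 closed_O4 by (rule closure_minimal)
  show "O4 \<subseteq> closure Hinf"
  proof
    fix A assume "A \<in> O4"
    then obtain M1 M2 M3 M4 where M: "M1 \<in> FF" "M2 \<in> FF" "M3 \<in> FF" "M4 \<in> FF"
      and A: "A = M1 ** (M2 ** (M3 ** M4))" using HH unfolding O4_def by blast
    show "A \<in> closure Hinf" unfolding A using M by (intro Hinf_mult FF_Hinf)
  qed
qed

lemma comm_CC: "a \<in> Sigma_roots \<Longrightarrow> b \<in> Sigma_roots \<Longrightarrow> reflmat a ** reflmat b ** reflmat a ** reflmat b \<in> CC"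
proof -
  assume a: "a \<in> Sigma_roots" and b: "b \<in> Sigma_roots"
  have "reflmat a ** reflmat b ** matrix_inv (reflmat a) ** matrix_inv (reflmat b) \<in>
      {g ** h ** matrix_inv g ** matrix_inv h | g h. g \<in> Hinf \<and> h \<in> Hinf}"
    using Sigma_refl[OF a] Sigma_refl[OF b] by blast
  then show ?thesis unfolding commutator_subgroup_def reflmat_inv[OF Sigma_unit[OF a]] reflmat_inv[OF Sigma_unit[OF b]]
    by (rule gen_group.gen)
qed

lemma CC_SO4: "CC \<subseteq> SO4"
  unfolding commutator_subgroup_def
proof (rule gen_group_SO4, safe)
  fix g h assume g: "g \<in> Hinf" and h: "h \<in> Hinf"
  have og: "orthogonal_matrix g" and oh: "orthogonal_matrix h" using g h Hinf_O4 by (auto simp: O4_def)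
  have dg: "det g * det g = 1" using det_orthogonal_matrix[OF og] by auto
  have dh: "det h * det h = 1" using det_orthogonal_matrix[OF oh] by auto
  show "g ** h ** matrix_inv g ** matrix_inv h \<in> SO4"
    unfolding SO4_def orth_inv[OF og] orth_inv[OF oh]
    using og oh dg dh by (simp add: orthogonal_matrix_mul det_mul det_transpose algebra_simps)
qed

lemma closure_CC_SO4: "closure CC \<subseteq> SO4"
  using CC_SO4 closed_SO4 by (rule closure_minimal)

lemma comm_closure: "u \<bullet> u = 1 \<Longrightarrow> w \<bullet> w = 1 \<Longrightarrow> reflmat u ** reflmat w ** reflmat u ** reflmat w \<in> closure CC"
  by (rule closure_comm[OF comm_CC]) (auto intro: unit_closure)

lemma pair_CC: assumes u: "u \<bullet> u = 1" and v: "v \<bullet> v = 1"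
  shows "reflmat u ** reflmat v \<in> closure CC"
proof (cases "u = v")
  case True
  then have "reflmat u ** reflmat v = mat 1" using reflmat_sq[OF u] by simp
  moreover have "mat 1 \<in> closure CC" using closure_subset gen_group.one unfolding commutator_subgroup_def by blast
  ultimately show ?thesis by simp
next
  case False
  define w where "w = (1 / norm (u - v)) *\<^sub>R (u - v)"
  note r = refl_swap[OF u v False w_def]
  have "reflmat v = reflmat w ** reflmat u ** reflmat w"
    using reflmat_conj[OF reflmat_orth[OF r(1)], of u] r(2) by (simp add: reflmat_act reflmat_transpose)
  then have "reflmat u ** reflmat v = reflmat u ** reflmat w ** reflmat u ** reflmat w"
    by (simp add: matrix_mul_assoc)
  then show ?thesis using comm_closure[OF u r(1)] by simp
qed

lemma det_E1: "det (reflmat E1) = -1"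
proof -
  have "det (reflmat E1) = prod (\<lambda>i. reflmat E1 $ i $ i) (UNIV::4 set)"
    by (rule det_diagonal) (auto simp: reflmat_def E1_def vector_def)
  also have "\<dots> = -1" unfolding UNIV4 by (simp add: reflmat_def E1_def vector_4)
  finally show ?thesis .
qed

lemma det_refl: assumes u: "u \<bullet> u = 1" shows "det (reflmat u) = -1"
proof -
  have e: "E1 \<bullet> E1 = 1" by (simp add: inner4 E1_def vector_4)
  have "det (reflmat u ** reflmat E1) = 1" using pair_CC[OF u e] closure_CC_SO4 by (auto simp: SO4_def)
  then show ?thesis using det_E1 by (simp add: det_mul)
qed

lemma FF_pair: "M \<in> FF \<Longrightarrow> N \<in> FF \<Longrightarrow> M ** N \<in> closure CC \<or> (\<exists>u. u \<bullet> u = 1 \<and> M ** N = reflmat u)"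
proof -
  have one: "mat 1 \<in> closure CC" using closure_subset gen_group.one unfolding commutator_subgroup_def by blast
  assume "M \<in> FF" "N \<in> FF"
  then show ?thesis unfolding FF_def
    using one pair_CC by (auto simp: matrix_mul_lid matrix_mul_rid)
qed

lemma part1: "closure CC = SO4"
proof
  show "closure CC \<subseteq> SO4" by (rule closure_CC_SO4)
  show "SO4 \<subseteq> closure CC"
  proof
    fix A assume A: "A \<in> SO4"
    then obtain M1 M2 M3 M4 where M: "M1 \<in> FF" "M2 \<in> FF" "M3 \<in> FF" "M4 \<in> FF"
      and A1: "A = M1 ** (M2 ** (M3 ** M4))" using HH unfolding SO4_def by blast
    have A2: "A = (M1 ** M2) ** (M3 ** M4)" unfolding A1 by (simp add: matrix_mul_assoc)
    have dA: "det A = 1" using A by (simp add: SO4_def)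
    have dL: "P \<in> closure CC \<Longrightarrow> det P = 1" for P using closure_CC_SO4 by (auto simp: SO4_def)
    from FF_pair[OF M(1,2)] FF_pair[OF M(3,4)] show "A \<in> closure CC"
    proof (elim disjE exE conjE)
      assume "M1 ** M2 \<in> closure CC" "M3 ** M4 \<in> closure CC"
      then show ?thesis unfolding A2 by (rule CC_mult)
    next
      fix u assume "M1 ** M2 \<in> closure CC" "u \<bullet> u = 1" "M3 ** M4 = reflmat u"
      then have d1: "det (M1 ** M2) = 1" and d2: "det (M3 ** M4) = -1" using dL det_refl by auto
      have "det A = -1" unfolding A2 det_mul[of "M1 ** M2" "M3 ** M4"] d1 d2 by simp
      then show ?thesis using dA by simp
    next
      fix u assume "M3 ** M4 \<in> closure CC" "u \<bullet> u = 1" "M1 ** M2 = reflmat u"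
      then have d1: "det (M3 ** M4) = 1" and d2: "det (M1 ** M2) = -1" using dL det_refl by auto
      have "det A = -1" unfolding A2 det_mul[of "M1 ** M2" "M3 ** M4"] d1 d2 by simp
      then show ?thesis using dA by simp
    next
      fix u v assume "u \<bullet> u = 1" "M1 ** M2 = reflmat u" "v \<bullet> v = 1" "M3 ** M4 = reflmat v"
      then show ?thesis unfolding A2 using pair_CC by simp
    qed
  qed
qed

theorem mainTheorem4:
  shows "closure (commutator_subgroup Hinf) = SO4
       \<and> closure Hinf = O4
       \<and> closure Sigma_roots = sphere (0 :: real^4) 1"
  using part1 part2 part3 by blast

end
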